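(* Let $n\ge1$, $\theta\in(0,2]$, $1\le r\le q<\infty$ and $\gamma\in\mathbb R$, with $\gamma\ge0$ if $r=q$. For $t>0$ let $h_t(x):=t^{-n/\theta}(1+t^{-1/\theta}|x|)^{-n-\theta}$, $x\in\mathbb R^n$. Then there exists $C>0$ such that $$\int_0^\infty\tau^{q(1-\frac1r)}\Big[\log\Big(e+\frac1\tau\Big)\Big]^\gamma(h_t^*(\tau))^q\,d\tau\le Ct^{-\frac{nq}\theta(\frac1r-\frac1q)}\Big[\log\Big(e+\frac1t\Big)\Big]^\gamma$$ for all $t>0$.
   Context: For a measurable $f$ on $\mathbb R^n$, its non-increasing rearrangement is $f^*(s):=\inf\{\lambda>0:|\{x:|f(x)|>\lambda\}|\le s\}$ for $s\ge0$. *)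

theory Defs
  imports "HOL-Analysis.Analysis"
begin

definition rearrangement :: "('a::euclidean_space \<Rightarrow> real) \<Rightarrow> real \<Rightarrow> real" where
  "rearrangement f s =
     Inf {l. (l::real) > 0 \<and> emeasure lborel {x. \<bar>f x\<bar> > l} \<le> ennreal s}"

definition hkernel :: "real \<Rightarrow> real \<Rightarrow> 'a::euclidean_space \<Rightarrow> real" where
  "hkernel \<theta> t x = t powr (- real DIM('a) / \<theta>)
       * (1 + t powr (-1 / \<theta>) * norm x) powr (- real DIM('a) - \<theta>)"

end

theory Submission
  imports Defs
begin



lemma rearr_le:
  assumes "0 < l" "emeasure lborel {x. \<bar>f x\<bar> > l} \<le> ennreal s"
  shows "rearrangement f s \<le> l"
  unfolding rearrangement_def
  by (rule cInf_lower) (use assms in \<open>auto intro: bdd_belowI[of _ 0]\<close>)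

lemma rearr_nonneg:
  assumes "0 < l" "emeasure lborel {x. \<bar>f x\<bar> > l} \<le> ennreal s"
  shows "0 \<le> rearrangement f s"
  unfolding rearrangement_def
  by (rule cInf_greatest) (use assms in auto)

lemma hk_base: "1 \<le> 1 + t powr a * norm x"
  by simp

lemma hk_pos: "0 < t \<Longrightarrow> 0 < hkernel \<theta> t x"
proof -
  assume t: "0 < t"
  have "0 \<le> t powr (-1/\<theta>) * norm x" by simp
  then have "0 < 1 + t powr (-1/\<theta>) * norm x" by linarith
  then show ?thesis unfolding hkernel_def using t by (intro mult_pos_pos) auto
qed

lemma hk_le_sup:
  assumes "0 < t" "0 < \<theta>"
  shows "hkernel \<theta> t (x::'a::euclidean_space) \<le> t powr (- real DIM('a) / \<theta>)"
proof -
  have "(1 + t powr (-1 / \<theta>) * norm x) powr (- real DIM('a) - \<theta>) \<le> 1 powr (- real DIM('a) - \<theta>)"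
    using assms by (intro powr_mono2' hk_base) auto
  then show ?thesis unfolding hkernel_def
    by (simp add: mult_left_le)
qed

lemma hk_tail:
  assumes "0 < t" "0 < \<theta>" "x \<noteq> 0"
  shows "hkernel \<theta> t (x::'a::euclidean_space) \<le> t * norm x powr (- (real DIM('a) + \<theta>))"
proof -
  define m where "m = real DIM('a) + \<theta>"
  have m: "m > 0" using assms by (simp add: m_def add_pos_pos)
  have u: "0 < t powr (-1 / \<theta>) * norm x" using assms by simp
  have "(1 + t powr (-1 / \<theta>) * norm x) powr (-m) \<le> (t powr (-1 / \<theta>) * norm x) powr (-m)"
    using m u by (intro powr_mono2') auto
  also have "\<dots> = t powr (m / \<theta>) * norm x powr (-m)"
    using assms by (simp add: powr_mult powr_powr)
  finally have A: "(1 + t powr (-1 / \<theta>) * norm x) powr (-m) \<le> t powr (m / \<theta>) * norm x powr (-m)" .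
  have "hkernel \<theta> t x \<le> t powr (- real DIM('a) / \<theta>) * (t powr (m / \<theta>) * norm x powr (-m))"
  proof -
    have eq: "- real DIM('a) - \<theta> = -m" by (simp add: m_def)
    show ?thesis unfolding hkernel_def eq using assms A
      by (intro mult_left_mono) auto
  qed
  also have "\<dots> = (t powr (- real DIM('a) / \<theta>) * t powr (m / \<theta>)) * norm x powr (-m)" by simp
  also have "t powr (- real DIM('a) / \<theta>) * t powr (m / \<theta>) = t"
    using assms by (simp add: powr_add[symmetric] m_def add_divide_distrib)
  finally show ?thesis by (simp add: m_def)
qed

lemma rearr_hk_sup:
  assumes "0 < t" "0 < \<theta>" "0 \<le> s"
  shows "rearrangement (hkernel \<theta> t :: 'a::euclidean_space \<Rightarrow> real) s \<le> t powr (- real DIM('a) / \<theta>)"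
    and "0 \<le> rearrangement (hkernel \<theta> t :: 'a::euclidean_space \<Rightarrow> real) s"
proof -
  let ?l = "t powr (- real DIM('a) / \<theta>)"
  have "{x. \<bar>(hkernel \<theta> t :: 'a \<Rightarrow> real) x\<bar> > ?l} = {}"
  proof -
    have "\<bar>(hkernel \<theta> t :: 'a \<Rightarrow> real) x\<bar> \<le> ?l" for x
      using hk_le_sup[OF assms(1,2), of x] hk_pos[OF assms(1), of \<theta> x] by (simp add: abs_of_pos)
    then show ?thesis by (auto simp: not_less[symmetric])
  qed
  then have E: "emeasure lborel {x. \<bar>(hkernel \<theta> t :: 'a \<Rightarrow> real) x\<bar> > ?l} \<le> ennreal s" by simp
  have l: "0 < ?l" using assms by simp
  show "rearrangement (hkernel \<theta> t :: 'a::euclidean_space \<Rightarrow> real) s \<le> ?l"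
    by (rule rearr_le[OF l E])
  show "0 \<le> rearrangement (hkernel \<theta> t :: 'a::euclidean_space \<Rightarrow> real) s"
    by (rule rearr_nonneg[OF l E])
qed

lemma rearr_hk_tail:
  assumes "0 < t" "0 < \<theta>" "0 < s"
  shows "rearrangement (hkernel \<theta> t :: 'a::euclidean_space \<Rightarrow> real) s
     \<le> t * ((unit_ball_vol (real DIM('a)) + 1) / s) powr ((real DIM('a) + \<theta>) / real DIM('a))"
proof -
  define n where "n = real DIM('a)"
  define V where "V = unit_ball_vol (real DIM('a))"
  have n: "n > 0" by (simp add: n_def)
  have V: "V > 0" by (simp add: V_def)
  define l where "l = t * ((V + 1) / s) powr ((n + \<theta>) / n)"
  define \<rho> where "\<rho> = (s / (V + 1)) powr (1 / n)"
  have l: "0 < l" using assms V by (simp add: l_def)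
  have \<rho>: "0 < \<rho>" using assms V by (simp add: \<rho>_def)
  have \<rho>pow: "\<rho> powr (- (n + \<theta>)) = ((V + 1) / s) powr ((n + \<theta>) / n)"
  proof -
    have ex: "(1 / n) * (- (n + \<theta>)) = - ((n + \<theta>) / n)" by (simp add: minus_divide_left)
    have "\<rho> powr (- (n + \<theta>)) = (s / (V + 1)) powr ((1 / n) * (- (n + \<theta>)))"
      unfolding \<rho>_def using assms V by (simp only: powr_powr)
    also have "\<dots> = (s / (V + 1)) powr (- ((n + \<theta>) / n))" by (simp only: ex)
    also have "\<dots> = ((V + 1) / s) powr ((n + \<theta>) / n)"
      using assms V by (simp add: powr_minus_divide powr_divide)
    finally show ?thesis .
  qed
  have sub: "{x. \<bar>(hkernel \<theta> t :: 'a \<Rightarrow> real) x\<bar> > l} \<subseteq> ball 0 \<rho>"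
  proof
    fix x :: 'a assume x: "x \<in> {x. \<bar>hkernel \<theta> t x\<bar> > l}"
    show "x \<in> ball 0 \<rho>"
    proof (rule ccontr)
      assume "x \<notin> ball 0 \<rho>"
      then have nx: "\<rho> \<le> norm x" by simp
      then have x0: "x \<noteq> 0" using \<rho> by auto
      have "hkernel \<theta> t x \<le> t * norm x powr (- (n + \<theta>))"
        using hk_tail[OF assms(1,2) x0] by (simp add: n_def)
      also have "\<dots> \<le> t * \<rho> powr (- (n + \<theta>))"
        using assms n \<rho> nx by (intro mult_left_mono powr_mono2') auto
      also have "\<dots> = l" by (simp only: \<rho>pow l_def)
      finally show False using x hk_pos[OF assms(1), of \<theta> x] by auto
    qed
  qed
  have "emeasure lborel {x. \<bar>(hkernel \<theta> t :: 'a \<Rightarrow> real) x\<bar> > l} \<le> emeasure lborel (ball (0::'a) \<rho>)"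
    by (rule emeasure_mono[OF sub]) simp
  also have "\<dots> = ennreal (V * \<rho> ^ DIM('a))" using \<rho> by (simp add: emeasure_ball V_def less_imp_le)
  also have "\<rho> ^ DIM('a) = s / (V + 1)"
  proof -
    have "\<rho> ^ DIM('a) = \<rho> powr n" using \<rho> by (simp add: powr_realpow n_def)
    also have "\<dots> = s / (V + 1)" unfolding \<rho>_def using assms V n by (simp add: powr_powr)
    finally show ?thesis .
  qed
  also have "ennreal (V * (s / (V + 1))) \<le> ennreal s"
    using V assms by (intro ennreal_leI) (simp add: field_simps)
  finally have E: "emeasure lborel {x. \<bar>(hkernel \<theta> t :: 'a \<Rightarrow> real) x\<bar> > l} \<le> ennreal s" .
  show ?thesis using rearr_le[OF l E] by (simp add: l_def V_def n_def)
qed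



lemma ln_e_ge1: "0 \<le> (x::real) \<Longrightarrow> 1 \<le> ln (exp 1 + x)"
proof -
  assume "0 \<le> x"
  then have "exp 1 \<le> exp 1 + x" by simp
  then have "ln (exp 1) \<le> ln (exp 1 + x)" by (intro ln_mono) auto
  then show ?thesis by simp
qed

lemma ln_e_mult:
  assumes "0 \<le> x" "0 \<le> (y::real)"
  shows "ln (exp 1 + x * y) \<le> ln (exp 1 + x) + ln (exp 1 + y)"
proof -
  have "exp 1 + x * y \<le> (exp 1 + x) * (exp 1 + y)"
  proof -
    have e1: "1 \<le> exp (1::real)" by simp
    have "exp 1 \<le> exp 1 * exp (1::real)" using e1 by simp
    moreover have "0 \<le> exp 1 * x" "0 \<le> exp 1 * y" using assms by simp_all
    moreover have "(exp 1 + x) * (exp 1 + y) = exp 1 * exp 1 + exp 1 * x + exp 1 * y + x * y"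
      by (simp add: algebra_simps)
    ultimately show ?thesis by linarith
  qed
  then have "ln (exp 1 + x * y) \<le> ln ((exp 1 + x) * (exp 1 + y))"
    using assms by (intro ln_mono) (auto intro: add_pos_nonneg)
  also have "\<dots> = ln (exp 1 + x) + ln (exp 1 + y)"
  proof -
    have "0 < exp 1 + x" "0 < exp 1 + y" using assms by (auto intro: add_pos_nonneg)
    then show ?thesis by (simp add: ln_mult)
  qed
  finally show ?thesis .
qed

lemma ln_e_powr:
  assumes "0 < k" "0 \<le> (x::real)"
  shows "ln (exp 1 + x powr k) \<le> (1 + max k 1) * ln (exp 1 + x)"
proof -
  define K where "K = max k 1"
  define y where "y = exp 1 + x"
  have ye0: "exp 1 \<le> y" using assms by (simp add: y_def)
  have y1: "1 \<le> y" proof -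
    have "1 \<le> exp (1::real)" by simp
    then show ?thesis using ye0 by linarith
  qed
  have ye: "exp 1 \<le> y" using assms by (simp add: y_def)
  have "x powr k \<le> y powr k" using assms by (intro powr_mono2) (auto simp: y_def)
  also have "\<dots> \<le> y powr K" using y1 by (intro powr_mono) (auto simp: K_def)
  finally have 1: "x powr k \<le> y powr K" .
  have "y = y powr 1" using y1 by simp
  also have "\<dots> \<le> y powr K" using y1 by (intro powr_mono) (auto simp: K_def)
  finally have 2: "exp 1 \<le> y powr K" using ye by linarith
  have "ln (exp 1 + x powr k) \<le> ln (2 * y powr K)"
    using 1 2 by (intro ln_mono) (auto intro: add_pos_nonneg)
  also have "\<dots> = ln 2 + K * ln y" using y1 by (simp add: ln_mult ln_powr)
  also have "\<dots> \<le> 1 * ln y + K * ln y"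
  proof -
    have "ln 2 \<le> (1::real)" using ln_2_less_1 by simp
    moreover have "1 \<le> ln y" using ln_e_ge1[OF assms(2)] by (simp add: y_def)
    ultimately show ?thesis by simp
  qed
  finally show ?thesis by (simp add: K_def y_def algebra_simps)
qed

lemma ln_le_powr_eps:
  assumes "1 \<le> (w::real)" "0 < \<epsilon>"
  shows "ln w \<le> w powr \<epsilon> / \<epsilon>"
proof -
  have "ln (w powr \<epsilon>) \<le> w powr \<epsilon> - 1" using assms by (intro ln_le_minus_one) auto
  then have "\<epsilon> * ln w \<le> w powr \<epsilon>" using assms by (simp add: ln_powr)
  then show ?thesis using assms by (simp add: field_simps)
qed



lemma log_main:
  fixes k t s \<gamma> :: real
  assumes k: "0 < k" and t: "0 < t" and s: "0 < s"
  shows "ln (exp 1 + 1 / (t powr k * s)) powr \<gamma>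
    \<le> ((1 + max k 1) * (1 + max (1/k) 1)) powr \<bar>\<gamma>\<bar> * ln (exp 1 + 1 / t) powr \<gamma>
       * (1 + ln (exp 1 + 1 / s) + ln (exp 1 + s)) powr \<bar>\<gamma>\<bar>"
proof -
  define T where "T = t powr k"
  define c where "c = (1 + max k 1) * (1 + max (1/k) 1)"
  define \<Lambda> where "\<Lambda> = 1 + ln (exp 1 + 1 / s) + ln (exp 1 + s)"
  define Lt where "Lt = ln (exp 1 + 1 / t)"
  define LT where "LT = ln (exp 1 + 1 / T)"
  define L where "L = ln (exp 1 + 1 / (T * s))"
  have T: "0 < T" using t by (simp add: T_def)
  have Lt1: "1 \<le> Lt" unfolding Lt_def using t by (intro ln_e_ge1) simp
  have LT1: "1 \<le> LT" unfolding LT_def using T by (intro ln_e_ge1) simp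
  have L1: "1 \<le> L" unfolding L_def using T s by (intro ln_e_ge1) simp
  have a1: "0 \<le> ln (exp 1 + 1 / s)" using ln_e_ge1[of "1/s"] s by simp
  have a2: "0 \<le> ln (exp 1 + s)" using ln_e_ge1[of s] s by simp
  have \<Lambda>1: "1 \<le> \<Lambda>" using a1 a2 by (simp add: \<Lambda>_def)
  have cA: "1 + max k 1 \<le> c" unfolding c_def
    by (rule mult_le_cancel_left1[THEN iffD2]) auto
  have cB: "1 + max (1/k) 1 \<le> c" unfolding c_def
    by (rule mult_le_cancel_right1[THEN iffD2]) auto
  have c1: "1 \<le> c" using cA by simp
  have "LT = ln (exp 1 + (1 / t) powr k)" unfolding LT_def T_def using t by (simp add: powr_divide)
  also have "\<dots> \<le> (1 + max k 1) * Lt" unfolding Lt_def using k t by (intro ln_e_powr) auto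
  also have "\<dots> \<le> c * Lt" using cA Lt1 by (intro mult_right_mono) auto
  finally have LT_le: "LT \<le> c * Lt" .
  have "1 / t = (1 / T) powr (1 / k)" unfolding T_def using t k by (simp add: powr_divide powr_powr)
  then have "Lt = ln (exp 1 + (1 / T) powr (1 / k))" by (simp add: Lt_def)
  also have "\<dots> \<le> (1 + max (1/k) 1) * LT" unfolding LT_def using k T by (intro ln_e_powr) auto
  also have "\<dots> \<le> c * LT" using cB LT1 by (intro mult_right_mono) auto
  finally have Lt_le: "Lt \<le> c * LT" .
  have "L = ln (exp 1 + (1 / T) * (1 / s))" by (simp add: L_def)
  also have "\<dots> \<le> LT + ln (exp 1 + 1 / s)" unfolding LT_def using T s by (intro ln_e_mult) auto
  finally have L_le: "L \<le> LT + ln (exp 1 + 1 / s)" .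
  have "LT = ln (exp 1 + (1 / (T * s)) * s)" using s by (simp add: LT_def)
  also have "\<dots> \<le> L + ln (exp 1 + s)" unfolding L_def using T s by (intro ln_e_mult) auto
  finally have LT_le2: "LT \<le> L + ln (exp 1 + s)" .
  show ?thesis
  proof (cases "0 \<le> \<gamma>")
    case True
    have "L \<le> LT * \<Lambda>"
    proof -
      have "0 \<le> (LT - 1) * (ln (exp 1 + 1 / s) + ln (exp 1 + s)) + ln (exp 1 + s)"
        using LT1 a1 a2 by simp
      then show ?thesis using L_le by (simp add: \<Lambda>_def algebra_simps)
    qed
    also have "\<dots> \<le> (c * Lt) * \<Lambda>" using LT_le \<Lambda>1 by (intro mult_right_mono) auto
    finally have "L powr \<gamma> \<le> (c * Lt * \<Lambda>) powr \<gamma>" using True L1 by (intro powr_mono2) auto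
    also have "\<dots> = c powr \<gamma> * Lt powr \<gamma> * \<Lambda> powr \<gamma>"
      using c1 Lt1 \<Lambda>1 by (simp add: powr_mult)
    finally show ?thesis using True by (simp add: L_def T_def c_def Lt_def \<Lambda>_def)
  next
    case False
    have "LT \<le> L * \<Lambda>"
    proof -
      have "0 \<le> (L - 1) * (ln (exp 1 + 1 / s) + ln (exp 1 + s)) + ln (exp 1 + 1 / s)"
        using L1 a1 a2 by simp
      then show ?thesis using LT_le2 by (simp add: \<Lambda>_def algebra_simps)
    qed
    then have "Lt \<le> c * (L * \<Lambda>)" using Lt_le c1 by (smt (verit) mult_left_mono)
    then have le: "Lt / (c * \<Lambda>) \<le> L" using c1 \<Lambda>1 by (simp add: field_simps)
    have pos: "0 < Lt / (c * \<Lambda>)" using c1 \<Lambda>1 Lt1 by simp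
    have "L powr \<gamma> \<le> (Lt / (c * \<Lambda>)) powr \<gamma>" using False le pos by (intro powr_mono2') auto
    also have "\<dots> = Lt powr \<gamma> * (c powr (-\<gamma>) * \<Lambda> powr (-\<gamma>))"
    proof -
      have "(Lt / (c * \<Lambda>)) powr \<gamma> = Lt powr \<gamma> / (c powr \<gamma> * \<Lambda> powr \<gamma>)"
        using c1 \<Lambda>1 Lt1 by (simp add: powr_divide powr_mult)
      then show ?thesis using c1 \<Lambda>1 by (simp add: powr_minus field_simps)
    qed
    finally show ?thesis using False by (simp add: L_def T_def c_def Lt_def \<Lambda>_def mult_ac)
  qed
qed



lemma lam_bound:
  fixes s \<epsilon> :: real
  assumes s: "0 < s" and e: "0 < \<epsilon>"
  shows "1 + ln (exp 1 + 1 / s) + ln (exp 1 + s) \<le> (1 + 2 * ln (exp 1 + 1) + 2 / \<epsilon>) * (max s (1/s)) powr \<epsilon>"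
proof -
  define w where "w = max s (1/s)"
  have w1: "1 \<le> w"
  proof (cases "1 \<le> s")
    case True then show ?thesis by (simp add: w_def)
  next
    case False then have "1 \<le> 1/s" using s by (simp add: field_simps)
    then show ?thesis by (simp add: w_def)
  qed
  have key: "ln (exp 1 + u) \<le> ln (exp 1 + 1) + w powr \<epsilon> / \<epsilon>" if u: "0 < u" "u \<le> w" for u
  proof -
    have "ln (exp 1 + u) \<le> ln ((exp 1 + 1) * w)"
    proof (rule ln_mono)
      show "0 < exp 1 + u" using u by (simp add: add_pos_pos)
      have "exp 1 + u \<le> exp 1 * w + w" using u w1 by (smt (verit) exp_gt_zero mult_le_cancel_left1)
      then show "exp 1 + u \<le> (exp 1 + 1) * w" by (simp add: algebra_simps)
    qed
    also have "\<dots> = ln (exp 1 + 1) + ln w" proof -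
      have "0 < exp 1 + (1::real)" by (simp add: add_pos_pos)
      then show ?thesis using w1 by (simp add: ln_mult)
    qed
    also have "\<dots> \<le> ln (exp 1 + 1) + w powr \<epsilon> / \<epsilon>" using ln_le_powr_eps[OF w1 e] by simp
    finally show ?thesis .
  qed
  have 1: "ln (exp 1 + 1 / s) \<le> ln (exp 1 + 1) + w powr \<epsilon> / \<epsilon>" using s by (intro key) (auto simp: w_def)
  have 2: "ln (exp 1 + s) \<le> ln (exp 1 + 1) + w powr \<epsilon> / \<epsilon>" using s by (intro key) (auto simp: w_def)
  have wp: "1 \<le> w powr \<epsilon>" using w1 e by (simp add: ge_one_powr_ge_zero)
  have "1 \<le> ln (exp 1 + (1::real))" by (rule ln_e_ge1) simp
  then have l0: "0 \<le> ln (exp 1 + (1::real))" by linarith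
  have "1 + ln (exp 1 + 1 / s) + ln (exp 1 + s) \<le> (1 + 2 * ln (exp 1 + 1)) + 2 * (w powr \<epsilon> / \<epsilon>)"
    using 1 2 by simp
  also have "\<dots> \<le> (1 + 2 * ln (exp 1 + 1)) * w powr \<epsilon> + 2 * (w powr \<epsilon> / \<epsilon>)"
  proof -
    have "(1 + 2 * ln (exp 1 + 1)) * 1 \<le> (1 + 2 * ln (exp 1 + (1::real))) * w powr \<epsilon>"
      by (rule mult_left_mono) (use wp l0 in auto)
    then show ?thesis by simp
  qed
  also have "\<dots> = (1 + 2 * ln (exp 1 + 1) + 2 / \<epsilon>) * w powr \<epsilon>" by (simp add: algebra_simps)
  finally show ?thesis by (simp add: w_def)
qed


definition Gfun :: "real \<Rightarrow> real \<Rightarrow> real \<Rightarrow> real" where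
  "Gfun c1 c2 x = indicator {0..1} x * x powr c1 + indicator {1..} x * x powr c2"

lemma Gfun_nonneg: "0 \<le> Gfun c1 c2 x"
  unfolding Gfun_def by (auto simp: indicator_def)

lemma Gfun_meas [measurable]: "Gfun c1 c2 \<in> borel_measurable borel"
  unfolding Gfun_def by measurable

lemma Gfun_integral:
  assumes "-1 < c1" "c2 < -1"
  shows "\<exists>I\<ge>0. (\<integral>\<^sup>+x. ennreal (Gfun c1 c2 x) \<partial>lborel) = ennreal I"
proof -
  have 1: "(\<integral>\<^sup>+x. ennreal (indicator {0..1} x * x powr c1) \<partial>lborel) = ennreal (1 powr (c1 + 1) / (c1 + 1))"
  proof -
    have h: "((\<lambda>x. x powr c1) has_integral (1 powr (c1 + 1) / (c1 + 1))) {0..1}"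
      by (rule has_integral_powr_from_0) (use assms in auto)
    show ?thesis by (rule nn_integral_has_integral_lebesgue[OF _ h]) simp
  qed
  have 2: "(\<integral>\<^sup>+x. ennreal (indicator {1..} x * x powr c2) \<partial>lborel) = ennreal (-(1 powr (c2 + 1)) / (c2 + 1))"
  proof -
    have h: "((\<lambda>x. x powr c2) has_integral (-(1 powr (c2 + 1)) / (c2 + 1))) {1..}"
      by (rule has_integral_powr_to_inf) (use assms in auto)
    show ?thesis by (rule nn_integral_has_integral_lebesgue[OF _ h]) simp
  qed
  define A where "A = 1 powr (c1 + 1) / (c1 + 1)"
  define B where "B = -(1 powr (c2 + 1)) / (c2 + 1)"
  have A: "0 \<le> A" using assms by (simp add: A_def)
  have B: "0 \<le> B" using assms by (simp add: B_def divide_nonneg_neg)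
  have "(\<integral>\<^sup>+x. ennreal (Gfun c1 c2 x) \<partial>lborel)
      = (\<integral>\<^sup>+x. ennreal (indicator {0..1} x * x powr c1) + ennreal (indicator {1..} x * x powr c2) \<partial>lborel)"
    unfolding Gfun_def by (intro nn_integral_cong ennreal_plus) simp_all
  also have "\<dots> = ennreal A + ennreal B"
    by (subst nn_integral_add) (simp_all only: 1 2 A_def B_def, measurable)
  also have "\<dots> = ennreal (A + B)" using A B by (rule ennreal_plus[symmetric])
  finally show ?thesis using A B by (intro exI[of _ "A + B"]) simp
qed

lemma Gfun_stretch:
  assumes T: "0 < T"
  shows "(\<integral>\<^sup>+x. ennreal (Gfun c1 c2 (x / T)) \<partial>lborel) = ennreal T * (\<integral>\<^sup>+x. ennreal (Gfun c1 c2 x) \<partial>lborel)"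
proof -
  have "(\<integral>\<^sup>+x. ennreal (Gfun c1 c2 (x / T)) \<partial>lborel) = \<bar>T\<bar> * (\<integral>\<^sup>+x. ennreal (Gfun c1 c2 ((0 + T * x) / T)) \<partial>lborel)"
    using T by (intro nn_integral_real_affine) auto
  then show ?thesis using T by simp
qed



lemma pointwise:
  fixes \<theta> r q \<gamma> t \<tau> \<epsilon> :: real
  assumes th: "0 < \<theta>" and r: "1 \<le> r" and rq: "r \<le> q" and t: "0 < t" and tau: "0 < \<tau>" and eps: "0 < \<epsilon>"
  defines "n \<equiv> real DIM('a::euclidean_space)"
  defines "k \<equiv> n / \<theta>"
  defines "T \<equiv> t powr k"
  defines "s \<equiv> \<tau> / T"
  defines "V \<equiv> unit_ball_vol n + 1"
  defines "c \<equiv> (1 + max k 1) * (1 + max (1/k) 1)"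
  defines "D \<equiv> 1 + 2 * ln (exp 1 + 1) + 2 / \<epsilon>"
  defines "a \<equiv> q * (1 - 1 / r)"
  defines "p \<equiv> (n + \<theta>) / n"
  defines "\<beta> \<equiv> \<epsilon> * \<bar>\<gamma>\<bar>"
  defines "M \<equiv> c powr \<bar>\<gamma>\<bar> * D powr \<bar>\<gamma>\<bar> * V powr (p * q)"
  shows "\<tau> powr a * ln (exp 1 + 1 / \<tau>) powr \<gamma>
           * rearrangement (hkernel \<theta> t :: 'a \<Rightarrow> real) \<tau> powr q
         \<le> M * T powr (a - q) * ln (exp 1 + 1 / t) powr \<gamma> * Gfun (a - \<beta>) (a - p * q + \<beta>) s"
proof -
  define R where "R = rearrangement (hkernel \<theta> t :: 'a \<Rightarrow> real) \<tau>"
  define Lt where "Lt = ln (exp 1 + 1 / t)"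
  define w where "w = max s (1 / s)"
  define \<Lambda> where "\<Lambda> = 1 + ln (exp 1 + 1 / s) + ln (exp 1 + s)"
  have n: "0 < n" by (simp add: n_def)
  have k: "0 < k" using n th by (simp add: k_def)
  have T: "0 < T" using t by (simp add: T_def)
  have s: "0 < s" using T tau by (simp add: s_def)
  have tauTs: "\<tau> = T * s" using T by (simp add: s_def)
  have q: "0 < q" using r rq by simp
  have a: "0 \<le> a" using r q by (simp add: a_def)
  have p: "0 < p" using n th by (simp add: p_def)
  have V: "1 \<le> V" unfolding V_def using n by simp
  have c1: "1 \<le> c" unfolding c_def by (rule order_trans[OF _ mult_left_mono[of 1]]) auto
  have D1: "1 \<le> D" unfolding D_def using ln_e_ge1[of 1] eps by simp
  have Lt1: "1 \<le> Lt" unfolding Lt_def using t by (intro ln_e_ge1) simp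
  have \<Lambda>0: "0 \<le> \<Lambda>" unfolding \<Lambda>_def using ln_e_ge1[of s] ln_e_ge1[of "1/s"] s by simp
  have w0: "0 < w" using s by (simp add: w_def)
  have R0: "0 \<le> R" unfolding R_def using rearr_hk_sup(2)[OF t th, where 'a='a] tau by simp
  have "ln (exp 1 + 1 / \<tau>) powr \<gamma> \<le> c powr \<bar>\<gamma>\<bar> * Lt powr \<gamma> * \<Lambda> powr \<bar>\<gamma>\<bar>"
    using log_main[OF k t s, of \<gamma>] by (simp add: tauTs T_def c_def Lt_def \<Lambda>_def)
  also have "\<Lambda> powr \<bar>\<gamma>\<bar> \<le> (D * w powr \<epsilon>) powr \<bar>\<gamma>\<bar>"
    using lam_bound[OF s eps] \<Lambda>0 by (intro powr_mono2) (auto simp: \<Lambda>_def D_def w_def)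
  also have "(D * w powr \<epsilon>) powr \<bar>\<gamma>\<bar> = D powr \<bar>\<gamma>\<bar> * w powr \<beta>"
    using D1 w0 by (simp add: powr_mult powr_powr \<beta>_def)
  finally have logb: "ln (exp 1 + 1 / \<tau>) powr \<gamma> \<le> c powr \<bar>\<gamma>\<bar> * Lt powr \<gamma> * (D powr \<bar>\<gamma>\<bar> * w powr \<beta>)"
    by (simp add: mult_left_mono)
  have tpow: "\<tau> powr a = T powr a * s powr a" using T s by (simp add: tauTs powr_mult)
  have Mpos: "0 \<le> c powr \<bar>\<gamma>\<bar> * D powr \<bar>\<gamma>\<bar>" by simp
  have M0: "0 \<le> M" by (simp add: M_def)
  have Vpq: "1 \<le> V powr (p * q)" using V p q by (simp add: ge_one_powr_ge_zero)
  show ?thesis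
  proof (cases "s \<le> 1")
    case True
    have "s * s \<le> 1" using True s by (simp add: mult_le_one)
    then have "s \<le> 1 / s" using s by (simp add: field_simps)
    then have ws: "w = 1 / s" by (simp add: w_def max_def)
    have "R \<le> t powr (- n / \<theta>)" unfolding R_def n_def using rearr_hk_sup(1)[OF t th, where 'a='a] tau by simp
    also have "t powr (- n / \<theta>) = T powr (-1)" using t by (simp add: T_def k_def powr_powr powr_minus_divide)
    finally have "R powr q \<le> (T powr (-1)) powr q" using R0 q by (intro powr_mono2) auto
    also have "\<dots> = T powr (-q)" using T by (simp add: powr_divide powr_minus_divide)
    finally have Rb: "R powr q \<le> T powr (-q)" .
    have "\<tau> powr a * ln (exp 1 + 1 / \<tau>) powr \<gamma> * R powr q
        \<le> (T powr a * s powr a) * (c powr \<bar>\<gamma>\<bar> * Lt powr \<gamma> * (D powr \<bar>\<gamma>\<bar> * w powr \<beta>)) * T powr (-q)"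
      unfolding tpow using logb Rb by (intro mult_mono) auto
    also have "\<dots> = (c powr \<bar>\<gamma>\<bar> * D powr \<bar>\<gamma>\<bar>) * (T powr a * T powr (-q)) * Lt powr \<gamma> * (s powr a * w powr \<beta>)"
      by (simp add: mult_ac)
    also have "T powr a * T powr (-q) = T powr (a - q)" using T by (simp add: powr_add[symmetric])
    also have "s powr a * w powr \<beta> = s powr (a - \<beta>)" using s by (simp add: ws powr_divide powr_diff)
    finally have E: "\<tau> powr a * ln (exp 1 + 1 / \<tau>) powr \<gamma> * R powr q
        \<le> (c powr \<bar>\<gamma>\<bar> * D powr \<bar>\<gamma>\<bar>) * T powr (a - q) * Lt powr \<gamma> * s powr (a - \<beta>)" .
    have G: "s powr (a - \<beta>) \<le> Gfun (a - \<beta>) (a - p * q + \<beta>) s"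
      using True s by (simp add: Gfun_def indicator_def)
    have "(c powr \<bar>\<gamma>\<bar> * D powr \<bar>\<gamma>\<bar>) * 1 \<le> (c powr \<bar>\<gamma>\<bar> * D powr \<bar>\<gamma>\<bar>) * V powr (p * q)"
      by (rule mult_left_mono[OF Vpq Mpos])
    then have MM: "c powr \<bar>\<gamma>\<bar> * D powr \<bar>\<gamma>\<bar> \<le> M" unfolding M_def by simp
    have "(c powr \<bar>\<gamma>\<bar> * D powr \<bar>\<gamma>\<bar>) * T powr (a - q) * Lt powr \<gamma> * s powr (a - \<beta>)
        \<le> M * T powr (a - q) * Lt powr \<gamma> * Gfun (a - \<beta>) (a - p * q + \<beta>) s"
      using MM G Mpos M0 by (intro mult_mono) auto
    with E show ?thesis by (simp add: R_def Lt_def)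
  next
    case False
    have ws: "w = s"
    proof -
      have "1 / s < 1" using False s by simp
      then have "1 / s < s" using False by linarith
      then show ?thesis by (simp add: w_def max_def)
    qed
    have kp: "T powr p = t * T"
    proof -
      have "k * p = 1 + k" using n th by (simp add: k_def p_def field_simps)
      then have "T powr p = t powr (1 + k)" using t by (simp add: T_def powr_powr)
      also have "\<dots> = t * T" using t by (simp add: powr_add T_def)
      finally show ?thesis .
    qed
    have "R \<le> t * (V / \<tau>) powr p"
      unfolding R_def V_def p_def n_def using rearr_hk_tail[OF t th tau, where 'a='a] by simp
    also have "t * (V / \<tau>) powr p = V powr p * s powr (-p) * T powr (-1)"
    proof -
      have "(V / \<tau>) powr p = V powr p / (T powr p * s powr p)"
        using V T s by (simp add: tauTs powr_divide powr_mult)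
      then show ?thesis using t T s V by (simp add: kp powr_minus_divide field_simps)
    qed
    finally have "R powr q \<le> (V powr p * s powr (-p) * T powr (-1)) powr q" using R0 q by (intro powr_mono2) auto
    also have "\<dots> = V powr (p * q) * s powr (- (p * q)) * T powr (-q)"
      using V s T by (simp add: powr_mult powr_powr del: powr_neg_one')
    finally have Rb: "R powr q \<le> V powr (p * q) * s powr (- (p * q)) * T powr (-q)" .
    have "\<tau> powr a * ln (exp 1 + 1 / \<tau>) powr \<gamma> * R powr q
        \<le> (T powr a * s powr a) * (c powr \<bar>\<gamma>\<bar> * Lt powr \<gamma> * (D powr \<bar>\<gamma>\<bar> * w powr \<beta>))
           * (V powr (p * q) * s powr (- (p * q)) * T powr (-q))"
      unfolding tpow using logb Rb by (intro mult_mono) auto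
    also have "\<dots> = M * (T powr a * T powr (-q)) * Lt powr \<gamma> * (s powr a * s powr \<beta> * s powr (- (p * q)))"
      by (simp add: ws M_def mult_ac)
    also have "T powr a * T powr (-q) = T powr (a - q)" using T by (simp add: powr_add[symmetric])
    also have "s powr a * s powr \<beta> * s powr (- (p * q)) = s powr (a - p * q + \<beta>)"
      using s by (simp add: powr_add[symmetric] algebra_simps)
    also have "s powr (a - p * q + \<beta>) = Gfun (a - \<beta>) (a - p * q + \<beta>) s"
      using False s by (simp add: Gfun_def indicator_def)
    finally show ?thesis by (simp add: R_def Lt_def)
  qed
qed



theorem lemma3p2:
  fixes \<theta> r q \<gamma> :: real
  assumes "0 < \<theta>" "\<theta> \<le> 2" "1 \<le> r" "r \<le> q" "r = q \<longrightarrow> \<gamma> \<ge> 0"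
  shows "\<exists>C>0. \<forall>t>0.
    (\<integral>\<^sup>+ \<tau> \<in> {0<..}. ennreal (\<tau> powr (q * (1 - 1 / r)) * (ln (exp 1 + 1 / \<tau>)) powr \<gamma>
        * (rearrangement (hkernel \<theta> t :: 'a::euclidean_space \<Rightarrow> real) \<tau>) powr q) \<partial>lborel)
    \<le> ennreal (C * t powr (- (real DIM('a) * q / \<theta>) * (1 / r - 1 / q))
        * (ln (exp 1 + 1 / t)) powr \<gamma>)"
proof -
  note th = assms(1) and r = assms(3) and rq = assms(4)
  define n where "n = real DIM('a)"
  define k where "k = n / \<theta>"
  define V where "V = unit_ball_vol n + 1"
  define c where "c = (1 + max k 1) * (1 + max (1/k) 1)"
  define m where "m = min 1 (q * \<theta> / n)"
  define \<epsilon> where "\<epsilon> = m / (2 * (\<bar>\<gamma>\<bar> + 1))"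
  define D where "D = 1 + 2 * ln (exp 1 + 1) + 2 / \<epsilon>"
  define a where "a = q * (1 - 1 / r)"
  define p where "p = (n + \<theta>) / n"
  define \<beta> where "\<beta> = \<epsilon> * \<bar>\<gamma>\<bar>"
  define M where "M = c powr \<bar>\<gamma>\<bar> * D powr \<bar>\<gamma>\<bar> * V powr (p * q)"
  have n: "0 < n" by (simp add: n_def)
  have q: "0 < q" using r rq by simp
  have m: "0 < m" "m \<le> 1" "m \<le> q * \<theta> / n" using n q th by (auto simp: m_def)
  have eps: "0 < \<epsilon>" using m by (simp add: \<epsilon>_def add_pos_nonneg)
  have \<beta>m: "\<beta> \<le> m / 2"
  proof -
    have "\<beta> = (m / 2) * (\<bar>\<gamma>\<bar> / (\<bar>\<gamma>\<bar> + 1))" by (simp add: \<beta>_def \<epsilon>_def)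
    also have "\<dots> \<le> (m / 2) * 1" using m by (intro mult_left_mono) auto
    finally show ?thesis by simp
  qed
  have \<beta>0: "0 \<le> \<beta>" using eps by (simp add: \<beta>_def)
  have a: "0 \<le> a" using r q by (simp add: a_def)
  have c1: "-1 < a - \<beta>" using \<beta>m m a by linarith
  have c2: "a - p * q + \<beta> < -1"
  proof -
    have "a - p * q = - (q / r) - q * \<theta> / n" using n r by (simp add: a_def p_def field_simps)
    moreover have "1 \<le> q / r" using r rq by simp
    moreover have "\<beta> < q * \<theta> / n" using \<beta>m m by linarith
    ultimately show ?thesis by linarith
  qed
  obtain I where I0: "0 \<le> I" and I: "(\<integral>\<^sup>+x. ennreal (Gfun (a - \<beta>) (a - p * q + \<beta>) x) \<partial>lborel) = ennreal I"
    using Gfun_integral[OF c1 c2] by blast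
  have M0: "0 \<le> M" by (simp add: M_def)
  define C where "C = M * I + 1"
  have C: "0 < C" using M0 I0 by (simp add: C_def add_nonneg_pos)
  show ?thesis
  proof (intro exI[of _ C] conjI allI impI C)
    fix t :: real assume t: "0 < t"
    define T where "T = t powr k"
    define Lt where "Lt = ln (exp 1 + 1 / t)"
    define G where "G = Gfun (a - \<beta>) (a - p * q + \<beta>)"
    define Kt where "Kt = M * T powr (a - q) * Lt powr \<gamma>"
    have T: "0 < T" using t by (simp add: T_def)
    have Kt0: "0 \<le> Kt" using M0 by (simp add: Kt_def)
    have pw: "\<tau> powr (q * (1 - 1 / r)) * (ln (exp 1 + 1 / \<tau>)) powr \<gamma>
        * (rearrangement (hkernel \<theta> t :: 'a \<Rightarrow> real) \<tau>) powr q \<le> Kt * G (\<tau> / T)" if tau: "0 < \<tau>" for \<tau>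
      using pointwise[OF th r rq t tau eps, where 'a='a]
      unfolding Kt_def G_def T_def Lt_def M_def c_def D_def V_def p_def a_def \<beta>_def k_def n_def
      by simp
    have "(\<integral>\<^sup>+ \<tau> \<in> {0<..}. ennreal (\<tau> powr (q * (1 - 1 / r)) * (ln (exp 1 + 1 / \<tau>)) powr \<gamma>
        * (rearrangement (hkernel \<theta> t :: 'a::euclidean_space \<Rightarrow> real) \<tau>) powr q) \<partial>lborel)
      \<le> (\<integral>\<^sup>+ \<tau>. ennreal (Kt * G (\<tau> / T)) \<partial>lborel)"
    proof (rule nn_integral_mono)
      fix \<tau> :: real
      show "ennreal (\<tau> powr (q * (1 - 1 / r)) * (ln (exp 1 + 1 / \<tau>)) powr \<gamma>
        * (rearrangement (hkernel \<theta> t :: 'a::euclidean_space \<Rightarrow> real) \<tau>) powr q) * indicator {0<..} \<tau>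
        \<le> ennreal (Kt * G (\<tau> / T))"
      proof (cases "0 < \<tau>")
        case True
        then show ?thesis using pw[OF True] by (simp add: ennreal_leI)
      qed simp
    qed
    also have "\<dots> = ennreal Kt * (\<integral>\<^sup>+ \<tau>. ennreal (G (\<tau> / T)) \<partial>lborel)"
      using Kt0 by (subst nn_integral_cmult[symmetric]) (auto simp: G_def Gfun_nonneg ennreal_mult)
    also have "(\<integral>\<^sup>+ \<tau>. ennreal (G (\<tau> / T)) \<partial>lborel) = ennreal T * ennreal I"
      unfolding G_def using Gfun_stretch[OF T] I by simp
    also have "ennreal Kt * (ennreal T * ennreal I) = ennreal (Kt * T * I)"
      using Kt0 T I0 by (simp add: ennreal_mult mult.assoc)
    also have "ennreal (Kt * T * I) \<le> ennreal (C * t powr (- (real DIM('a) * q / \<theta>) * (1 / r - 1 / q))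
        * (ln (exp 1 + 1 / t)) powr \<gamma>)"
    proof (rule ennreal_leI)
      have "T powr (a - q) * T = t powr (- (real DIM('a) * q / \<theta>) * (1 / r - 1 / q))"
      proof -
        have "T powr (a - q) * T = T powr (a - q + 1)" using T by (simp add: powr_add)
        also have "\<dots> = t powr (k * (a - q + 1))" using t by (simp add: T_def powr_powr)
        also have "k * (a - q + 1) = - (real DIM('a) * q / \<theta>) * (1 / r - 1 / q)"
          using th q r by (simp add: k_def a_def n_def field_simps)
        finally show ?thesis .
      qed
      then have "Kt * T * I = (M * I) * t powr (- (real DIM('a) * q / \<theta>) * (1 / r - 1 / q)) * Lt powr \<gamma>"
        by (simp add: Kt_def mult_ac)
      also have "\<dots> \<le> C * t powr (- (real DIM('a) * q / \<theta>) * (1 / r - 1 / q)) * Lt powr \<gamma>"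
        by (intro mult_right_mono) (auto simp: C_def)
      finally show "Kt * T * I \<le> C * t powr (- (real DIM('a) * q / \<theta>) * (1 / r - 1 / q)) * (ln (exp 1 + 1 / t)) powr \<gamma>"
        by (simp add: Lt_def)
    qed
    finally show "(\<integral>\<^sup>+ \<tau> \<in> {0<..}. ennreal (\<tau> powr (q * (1 - 1 / r)) * (ln (exp 1 + 1 / \<tau>)) powr \<gamma>
        * (rearrangement (hkernel \<theta> t :: 'a::euclidean_space \<Rightarrow> real) \<tau>) powr q) \<partial>lborel)
      \<le> ennreal (C * t powr (- (real DIM('a) * q / \<theta>) * (1 / r - 1 / q)) * (ln (exp 1 + 1 / t)) powr \<gamma>)" .
  qed
qed

end
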